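(* Let $\mathfrak{B}$ be the Banach space of tensors (of a fixed shape) equipped with the spectral norm, and let $\mathcal{X}\in\mathfrak{B}$ be any zero-mean random Hermitian tensor. Then for every non-random Hermitian tensor $\mathcal{A}$ of the same dimensions as $\mathcal{X}$ with $\|\mathcal{A}\|_{(k)}>0$, $$\mathrm{Pr}\big(\|\mathcal{A}+\mathcal{X}\|_{(k)}\ge\|\mathcal{A}\|_{(k)}\big)\ge\frac14\inf_{f\in F}\frac{(\mathbb{E}|f(\mathcal{X})|)^2}{\mathbb{E}(f^2(\mathcal{X}))},$$ where $F$ is the family of linear functionals on $\mathfrak{B}$.
   Context: Singular values of a tensor are those of its unfolded matrix (identify multi-indices with single indices by a fixed bijection); $\|\mathcal{T}\|_{(k)}$ is the Ky Fan $k$-norm, the sum of the $k$ largest singular values. Hermitian means $\mathcal{X}^H=\mathcal{X}$ (conjugate transpose under the row/column multi-index split). *)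

theory Defs
  imports "HOL-Analysis.Analysis" "HOL-Probability.Probability"
    "HOL-Computational_Algebra.Polynomial"
begin

text \<open>A tensor with row multi-index set and column multi-index set both equal to the
  finite type 'n (multi-indices identified with the elements of 'n by a fixed bijection)
  is represented directly by its unfolded square matrix of type complex^'n^'n.\<close>

definition hconj :: "complex^'n^'n \<Rightarrow> complex^'n^'n" where
  "hconj A = (\<chi> i j. cnj (A $ j $ i))"

definition hermitian :: "complex^'n^'n \<Rightarrow> bool" where
  "hermitian A \<longleftrightarrow> hconj A = A"

definition char_poly_cart :: "complex^'n^'n \<Rightarrow> complex poly" where
  "char_poly_cart M = det ((\<chi> i j. (if i = j then [:0, 1:] else 0) - [:M $ i $ j:]) :: complex poly^'n^'n)"

definition singular_values :: "complex^'n^'n \<Rightarrow> real multiset" where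
  "singular_values A = image_mset (\<lambda>z. sqrt (Re z)) (proots (char_poly_cart (hconj A ** A)))"

definition ky_fan_norm :: "nat \<Rightarrow> complex^'n^'n \<Rightarrow> real" where
  "ky_fan_norm k A = sum_list (take k (rev (sorted_list_of_multiset (singular_values A))))"

text \<open>Paley--Zygmund ratio (E|f(X)|)^2 / E(f(X)^2); convention: value 1 if f(X)=0 a.s.
  (then the ratio is 0/0); x/\<infinity> = 0 in ennreal.\<close>
definition pz_ratio :: "'a measure \<Rightarrow> ('a \<Rightarrow> 'b) \<Rightarrow> ('b \<Rightarrow> real) \<Rightarrow> ennreal" where
  "pz_ratio M X f =
     (if (\<integral>\<^sup>+ \<omega>. ennreal ((f (X \<omega>))\<^sup>2) \<partial>M) = 0 then 1
      else (\<integral>\<^sup>+ \<omega>. ennreal \<bar>f (X \<omega>)\<bar> \<partial>M)\<^sup>2 / (\<integral>\<^sup>+ \<omega>. ennreal ((f (X \<omega>))\<^sup>2) \<partial>M))"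

end

theory Submission
  imports Defs
begin


definition cinner :: "complex^'n \<Rightarrow> complex^'n \<Rightarrow> complex" where
  "cinner x y = (\<Sum>i\<in>UNIV. cnj (x$i) * y$i)"

lemma cinner_add_left: "cinner (x + y) z = cinner x z + cinner y z"
  by (simp add: cinner_def sum.distrib algebra_simps)
lemma cinner_add_right: "cinner z (x + y) = cinner z x + cinner z y"
  by (simp add: cinner_def sum.distrib algebra_simps)
lemma cinner_diff_left: "cinner (x - y) z = cinner x z - cinner y z"
  by (simp add: cinner_def sum_subtractf algebra_simps)
lemma cinner_diff_right: "cinner z (x - y) = cinner z x - cinner z y"
  by (simp add: cinner_def sum_subtractf algebra_simps)
lemma cinner_smult_left: "cinner (c *s x) z = cnj c * cinner x z"
  by (simp add: cinner_def sum_distrib_left algebra_simps)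
lemma cinner_smult_right: "cinner z (c *s x) = c * cinner z x"
  by (simp add: cinner_def sum_distrib_left algebra_simps)
lemma cinner_scaleR_left: "cinner (c *\<^sub>R x) z = of_real c * cinner x z"
  by (simp add: cinner_def sum_distrib_left algebra_simps scaleR_vec_def scaleR_conv_of_real)
lemma cinner_scaleR_right: "cinner z (c *\<^sub>R x) = of_real c * cinner z x"
  by (simp add: cinner_def sum_distrib_left algebra_simps scaleR_vec_def scaleR_conv_of_real)
lemma cinner_zero_left[simp]: "cinner 0 z = 0" by (simp add: cinner_def)
lemma cinner_zero_right[simp]: "cinner z 0 = 0" by (simp add: cinner_def)
lemma cinner_sum_left: "cinner (\<Sum>i\<in>S. f i) z = (\<Sum>i\<in>S. cinner (f i) z)"
  by (induction S rule: infinite_finite_induct) (auto simp: cinner_add_left)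
lemma cinner_sum_right: "cinner z (\<Sum>i\<in>S. f i) = (\<Sum>i\<in>S. cinner z (f i))"
  by (induction S rule: infinite_finite_induct) (auto simp: cinner_add_right)
lemma cinner_commute: "cinner y x = cnj (cinner x y)"
  by (simp add: cinner_def mult.commute)

lemma norm_sq_vec: "(norm (x::complex^'n))^2 = (\<Sum>i\<in>UNIV. (cmod (x$i))^2)"
  by (simp add: norm_vec_def L2_set_def sum_nonneg)

lemma cinner_self: "cinner x x = complex_of_real ((norm x)^2)"
  unfolding norm_sq_vec cinner_def of_real_sum
  by (intro sum.cong refl) (metis complex_norm_square mult.commute of_real_power)

lemma Re_cinner: "Re (cinner x y) = inner x y"
  by (simp add: cinner_def inner_vec_def inner_complex_def)

lemma cinner_eq0_iff: "cinner x y = 0 \<longleftrightarrow> inner x y = 0 \<and> inner x (\<i> *s y) = 0"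
proof -
  have "inner x (\<i> *s y) = Re (cinner x (\<i> *s y))" by (simp add: Re_cinner)
  also have "\<dots> = - Im (cinner x y)" by (simp add: cinner_smult_right)
  finally show ?thesis by (simp add: complex_eq_iff Re_cinner[symmetric])
qed

definition hconjv :: "complex^'n^'m \<Rightarrow> complex^'m^'n" where
  "hconjv A = (\<chi> i j. cnj (A $ j $ i))"

lemma cinner_adj: "cinner (A *v x) y = cinner x (hconjv A *v y)"
proof -
  have "cinner (A *v x) y = (\<Sum>i\<in>UNIV. \<Sum>j\<in>UNIV. cnj (A$i$j) * cnj (x$j) * y$i)"
    by (simp add: cinner_def matrix_vector_mult_def sum_distrib_right)
  also have "\<dots> = (\<Sum>j\<in>UNIV. \<Sum>i\<in>UNIV. cnj (A$i$j) * cnj (x$j) * y$i)"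
    by (rule sum.swap)
  also have "\<dots> = cinner x (hconjv A *v y)"
    by (simp add: cinner_def matrix_vector_mult_def hconjv_def sum_distrib_left mult_ac)
  finally show ?thesis .
qed

lemma hconj_hconjv: "hconj A = hconjv A"
  by (simp add: hconj_def hconjv_def)



lemma mv_add: "(H::complex^'n^'m) *v (x + y) = H *v x + H *v y"
  by (simp add: matrix_vector_mult_def vec_eq_iff sum.distrib algebra_simps)
lemma mv_diff: "(H::complex^'n^'m) *v (x - y) = H *v x - H *v y"
  by (simp add: matrix_vector_mult_def vec_eq_iff sum_subtractf algebra_simps)
lemma mv_scaleR: "(H::complex^'n^'m) *v (t *\<^sub>R x) = t *\<^sub>R (H *v x)"
  by (simp add: matrix_vector_mult_def vec_eq_iff scaleR_sum_right)
lemma mv_smult: "(H::complex^'n^'m) *v (c *s x) = c *s (H *v x)"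
  by (simp add: matrix_vector_mult_def vec_eq_iff sum_distrib_left algebra_simps)
lemma mv_sum: "(H::complex^'n^'m) *v (\<Sum>i\<in>S. f i) = (\<Sum>i\<in>S. H *v f i)"
  by (induction S rule: infinite_finite_induct) (auto simp: mv_add)

definition herm_op :: "complex^'n^'n \<Rightarrow> bool" where
  "herm_op H \<longleftrightarrow> (\<forall>x y. cinner (H *v x) y = cinner x (H *v y))"

lemma cont_cinner: "continuous_on UNIV (\<lambda>x. cinner w x)"
  unfolding cinner_def by (intro continuous_intros)

lemma cont_R: "continuous_on UNIV (\<lambda>x. Re (cinner x ((H::complex^'n^'n) *v x)))"
  unfolding cinner_def matrix_vector_mult_def by (simp; intro continuous_intros)

lemma cinner_self_real: "herm_op H \<Longrightarrow> cinner x (H *v x) = of_real (Re (cinner x (H *v x)))"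
  unfolding herm_op_def
  by (metis cinner_commute complex_is_Real_iff Reals_cnj_iff Re_complex_of_real of_real_Re)

lemma exists_orth_unit:
  fixes W :: "(complex^'n) set"
  assumes "finite W" "card W < CARD('n)"
  shows "\<exists>x. norm x = 1 \<and> (\<forall>w\<in>W. cinner w x = 0)"
proof -
  let ?B = "W \<union> (\<lambda>w. \<i> *s w) ` W"
  have "card ?B \<le> card W + card ((\<lambda>w. \<i> *s w) ` W)" by (rule card_Un_le)
  also have "\<dots> \<le> 2 * card W" using card_image_le[OF assms(1)] by auto
  finally have "dim ?B < DIM(complex^'n)"
    using assms dim_le_card'[of ?B] by (simp add: DIM_cart)
  then obtain z where z: "z \<noteq> 0" "\<And>y. y \<in> span ?B \<Longrightarrow> orthogonal z y"
    using orthogonal_to_subspace_exists by blast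
  have "cinner w z = 0" if "w \<in> W" for w
  proof -
    have "inner z w = 0" "inner z (\<i> *s w) = 0"
      using z(2)[of w] z(2)[of "\<i> *s w"] that by (auto simp: orthogonal_def span_base)
    then have "cinner z w = 0" by (simp add: cinner_eq0_iff)
    then show ?thesis by (metis cinner_commute complex_cnj_zero)
  qed
  then show ?thesis using z(1)
    by (intro exI[of _ "(1 / norm z) *\<^sub>R z"]) (auto simp: cinner_scaleR_right)
qed

lemma eigvec_step:
  fixes H :: "complex^'n^'n" and W :: "(complex^'n) set"
  assumes herm: "herm_op H" and fin: "finite W" and card: "card W < CARD('n)"
    and eig: "\<forall>w\<in>W. \<exists>\<mu>::real. H *v w = \<mu> *\<^sub>R w"
  shows "\<exists>x \<mu>. norm x = 1 \<and> (\<forall>w\<in>W. cinner w x = 0) \<and> H *v x = (\<mu>::real) *\<^sub>R x"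
proof -
  define S where "S = {x. \<forall>w\<in>W. cinner w x = 0}"
  define K where "K = {x. norm x = 1 \<and> (\<forall>w\<in>W. cinner w x = 0)}"
  define R where "R = (\<lambda>x. Re (cinner x (H *v x)))"
  have hermD: "cinner (H *v x) y = cinner x (H *v y)" for x y using herm by (simp add: herm_op_def)
  have "K \<noteq> {}" using exists_orth_unit[OF fin card] by (auto simp: K_def)
  have "closed K"
  proof -
    have "K = {x. norm x = 1} \<inter> (\<Inter>w\<in>W. {x. cinner w x = 0})" by (auto simp: K_def)
    moreover have "closed {x::complex^'n. norm x = 1}"
      by (intro closed_Collect_eq continuous_intros)
    moreover have "closed {x. cinner w x = 0}" for w
      using closed_Collect_eq[OF cont_cinner[of w] continuous_on_const] by simp
    ultimately show ?thesis by auto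
  qed
  moreover have "bounded K" by (rule bounded_subset[OF bounded_cball[of 0 1]]) (auto simp: K_def)
  ultimately have "compact K" by (simp add: compact_eq_bounded_closed)
  then obtain x0 where x0: "x0 \<in> K" and max: "\<And>y. y \<in> K \<Longrightarrow> R y \<le> R x0"
    using continuous_attains_sup[OF _ \<open>K \<noteq> {}\<close> continuous_on_subset[OF cont_R subset_UNIV]]
    unfolding R_def by blast
  define lam where "lam = R x0"
  have R_scale: "R (t *\<^sub>R y) = t^2 * R y" for t y
    by (simp add: R_def mv_scaleR cinner_scaleR_left cinner_scaleR_right power2_eq_square)
  have maxS: "R y \<le> lam * (norm y)^2" if "y \<in> S" for y
  proof (cases "y = 0")
    case True then show ?thesis by (simp add: R_def)
  next
    case False
    have "(1/norm y) *\<^sub>R y \<in> K" using that False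
      by (auto simp: K_def S_def cinner_scaleR_right)
    then have "R ((1/norm y) *\<^sub>R y) \<le> lam" using max lam_def by blast
    then have "(1/norm y)^2 * R y \<le> lam" by (simp add: R_scale)
    then show ?thesis using False by (simp add: field_simps)
  qed
  have x0n: "norm x0 = 1" and x0S: "x0 \<in> S" using x0 by (auto simp: K_def S_def)
  have c0: "cinner x0 (H *v x0) = of_real lam"
    using cinner_self_real[OF herm] by (simp add: lam_def R_def)
  have x0x0: "cinner x0 x0 = 1" using x0n by (simp add: cinner_self)
  define w where "w = H *v x0 - lam *\<^sub>R x0"
  have wS: "w \<in> S"
    unfolding S_def
  proof safe
    fix u assume "u \<in> W"
    then obtain mu :: real where mu: "H *v u = mu *\<^sub>R u" using eig by blast
    have "cinner u (H *v x0) = cinner (H *v u) x0" by (simp add: hermD)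
    also have "\<dots> = 0" using x0S \<open>u \<in> W\<close> by (simp add: mu cinner_scaleR_left S_def)
    finally show "cinner u w = 0"
      using x0S \<open>u \<in> W\<close> by (simp add: w_def cinner_diff_right cinner_scaleR_right S_def)
  qed
  have x0w: "cinner x0 w = 0"
    by (simp add: w_def cinner_diff_right cinner_scaleR_right c0 x0x0)
  have wx0: "cinner w x0 = 0" using x0w by (metis cinner_commute complex_cnj_zero)
  define a where "a = (norm w)^2"
  have ww: "cinner w w = of_real a" by (simp add: a_def cinner_self)
  have wHx0: "cinner w (H *v x0) = of_real a"
  proof -
    have "H *v x0 = w + lam *\<^sub>R x0" by (simp add: w_def)
    then show ?thesis by (simp add: cinner_add_right cinner_scaleR_right ww wx0)
  qed
  have x0Hw: "cinner x0 (H *v w) = of_real a"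
    using wHx0 hermD by (metis cinner_commute complex_cnj_complex_of_real)
  define c where "c = lam * a - R w"
  have key: "2 * a \<le> t * c" if "t > 0" for t
  proof -
    let ?z = "x0 + t *\<^sub>R w"
    have zS: "?z \<in> S" using x0S wS
      by (simp add: S_def cinner_add_right cinner_scaleR_right)
    have nz: "(norm ?z)^2 = 1 + t^2 * a"
    proof -
      have "complex_of_real ((norm ?z)^2) = cinner ?z ?z" by (simp add: cinner_self)
      also have "\<dots> = of_real (1 + t^2 * a)"
        by (simp add: cinner_add_left cinner_add_right cinner_scaleR_left cinner_scaleR_right
            x0x0 x0w wx0 ww power2_eq_square)
      finally show ?thesis using of_real_eq_iff by blast
    qed
    have Rz: "R ?z = lam + 2 * t * a + t^2 * R w"
      by (simp add: R_def mv_add mv_scaleR cinner_add_left cinner_add_right cinner_scaleR_left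
          cinner_scaleR_right c0 x0Hw wHx0 power2_eq_square algebra_simps)
    have "lam + 2 * t * a + t^2 * R w \<le> lam * (1 + t^2 * a)"
      using maxS[OF zS] nz Rz by simp
    then have "t * (2 * a) \<le> t * (t * c)" by (simp add: c_def algebra_simps power2_eq_square)
    then show ?thesis using that by simp
  qed
  have "a = 0"
  proof (rule ccontr)
    assume "a \<noteq> 0"
    then have apos: "a > 0" by (simp add: a_def)
    define t where "t = a / (\<bar>c\<bar> + 1)"
    have tpos: "t > 0" using apos by (simp add: t_def)
    have "t * c \<le> t * \<bar>c\<bar>" using tpos by (simp add: mult_left_mono)
    also have "\<dots> < a" using apos by (simp add: t_def field_simps)
    finally show False using key[OF tpos] apos by simp
  qed
  then have "w = 0" by (simp add: a_def)
  then have "H *v x0 = lam *\<^sub>R x0" by (simp add: w_def)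
  then show ?thesis using x0n x0S by (auto simp: S_def)
qed



lemma onb_sets:
  fixes H :: "complex^'n^'n"
  assumes herm: "herm_op H"
  shows "m \<le> CARD('n) \<Longrightarrow> \<exists>W. finite W \<and> card W = m \<and>
     (\<forall>w\<in>W. norm w = 1 \<and> (\<exists>\<mu>::real. H *v w = \<mu> *\<^sub>R w)) \<and>
     (\<forall>w\<in>W. \<forall>w'\<in>W. w \<noteq> w' \<longrightarrow> cinner w w' = 0)"
proof (induction m)
  case 0 then show ?case by (intro exI[of _ "{}"]) auto
next
  case (Suc m)
  then obtain W where W: "finite W" "card W = m" "\<forall>w\<in>W. norm w = 1 \<and> (\<exists>\<mu>::real. H *v w = \<mu> *\<^sub>R w)"
     "\<forall>w\<in>W. \<forall>w'\<in>W. w \<noteq> w' \<longrightarrow> cinner w w' = 0" by auto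
  obtain x mu where x: "norm x = 1" "\<forall>w\<in>W. cinner w x = 0" "H *v x = (mu::real) *\<^sub>R x"
    using eigvec_step[OF herm W(1)] W Suc.prems by fastforce
  have "x \<notin> W" using x(1,2) by (metis cinner_self of_real_eq_0_iff norm_eq_zero zero_neq_one power_not_zero
        zero_neq_numeral)
  have x2: "\<forall>w\<in>W. cinner x w = 0" using x(2) by (metis cinner_commute complex_cnj_zero)
  show ?case
    apply (intro exI[of _ "insert x W"])
    using W x x2 \<open>x \<notin> W\<close> by auto
qed

lemma onb_exists:
  fixes H :: "complex^'n^'n"
  assumes herm: "herm_op H"
  shows "\<exists>(v::'n \<Rightarrow> complex^'n) lam. (\<forall>i j. cinner (v i) (v j) = (if i = j then 1 else 0)) \<and>
                (\<forall>i. H *v v i = (lam i :: real) *\<^sub>R v i)"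
proof -
  obtain W where W: "finite W" "card W = CARD('n)" "\<forall>w\<in>W. norm w = 1 \<and> (\<exists>\<mu>::real. H *v w = \<mu> *\<^sub>R w)"
     "\<forall>w\<in>W. \<forall>w'\<in>W. w \<noteq> w' \<longrightarrow> cinner w w' = 0"
    using onb_sets[OF herm, of "CARD('n)"] by auto
  obtain v where v: "bij_betw v (UNIV::'n set) W"
    using finite_same_card_bij[of "UNIV::'n set" W] W by auto
  have vW: "v i \<in> W" for i using v by (auto simp: bij_betw_def)
  have inj: "v i = v j \<Longrightarrow> i = j" for i j using v by (auto simp: bij_betw_def inj_def)
  define lam where "lam i = (SOME mu::real. H *v v i = mu *\<^sub>R v i)" for i
  have "H *v v i = lam i *\<^sub>R v i" for i
    unfolding lam_def by (rule someI_ex) (use W(3) vW in blast)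
  moreover have "cinner (v i) (v j) = (if i = j then 1 else 0)" for i j
    using W(3,4) vW inj by (metis cinner_self of_real_1 power_one)
  ultimately show ?thesis by (intro exI[of _ v] exI[of _ lam]) blast
qed



definition liftp :: "complex^'n^'m \<Rightarrow> complex poly^'n^'m" where
  "liftp A = (\<chi> i j. [:A$i$j:])"

lemma const_poly_add: "[:a + b:] = [:a:] + [:b:]" by simp

lemma const_poly_sum: "[:sum f S:] = (\<Sum>i\<in>S. [:f i:])"
  by (induction S rule: infinite_finite_induct) (auto simp del: add_pCons simp: const_poly_add)

lemma liftp_mult: "liftp (A ** B) = liftp A ** liftp B"
  by (simp add: liftp_def matrix_matrix_mult_def vec_eq_iff const_poly_sum mult.commute)

lemma liftp_mat1: "liftp (mat 1 :: complex^'n^'n) = mat 1"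
  by (simp add: liftp_def mat_def vec_eq_iff)

lemma mat_comm: "(A::'a::comm_ring_1^'n^'n) ** mat c = mat c ** A"
  unfolding matrix_matrix_mult_def mat_def
  by (auto simp: vec_eq_iff if_distrib if_distribR sum.delta sum.delta' mult.commute cong: if_cong)

lemma matrix_sub_ldistrib': "(A::'a::comm_ring_1^'n^'m) ** (B - C) = A ** B - A ** C"
  by (simp add: matrix_matrix_mult_def vec_eq_iff sum_subtractf algebra_simps)
lemma matrix_sub_rdistrib': "((B::'a::comm_ring_1^'n^'m) - C) ** A = B ** A - C ** A"
  by (simp add: matrix_matrix_mult_def vec_eq_iff sum_subtractf algebra_simps)

lemma charmat_eq: "(\<chi> i j. (if i = j then [:0, 1:] else 0) - [:M $ i $ j:]) = mat [:0,1:] - liftp M"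
  by (simp add: mat_def liftp_def vec_eq_iff)

lemma char_poly_diag:
  fixes H Q U D :: "complex^'n^'n"
  assumes QU: "Q ** U = mat 1" and HU: "Q ** H ** U = D"
    and diag: "\<And>i j. i \<noteq> j \<Longrightarrow> D$i$j = 0"
  shows "char_poly_cart H = (\<Prod>i\<in>UNIV. [:- D$i$i, 1:])"
proof -
  let ?X = "mat [:0,1:] :: complex poly^'n^'n"
  have dQU: "det (liftp Q) * det (liftp U) = 1"
    using QU by (metis det_I det_mul liftp_mat1 liftp_mult)
  have "liftp Q ** (?X - liftp H) ** liftp U = ?X - liftp D"
  proof -
    have "liftp Q ** (?X - liftp H) ** liftp U = liftp Q ** ?X ** liftp U - liftp Q ** liftp H ** liftp U"
      by (simp add: matrix_sub_ldistrib' matrix_sub_rdistrib')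
    also have "liftp Q ** ?X ** liftp U = ?X ** (liftp Q ** liftp U)"
      by (simp add: mat_comm matrix_mul_assoc)
    also have "liftp Q ** liftp U = mat 1" using QU by (metis liftp_mat1 liftp_mult)
    also have "liftp Q ** liftp H ** liftp U = liftp D" using HU by (metis liftp_mult)
    finally show ?thesis by simp
  qed
  then have "det (liftp Q) * det (?X - liftp H) * det (liftp U) = det (?X - liftp D)"
    by (metis det_mul)
  moreover have "det (?X - liftp H) = det (liftp Q) * det (liftp U) * det (?X - liftp H)"
    using dQU by simp
  ultimately have "det (?X - liftp H) = det (?X - liftp D)"
    by (simp add: mult_ac)
  also have "\<dots> = (\<Prod>i\<in>UNIV. (?X - liftp D)$i$i)"
    by (rule det_diagonal) (simp add: mat_def liftp_def diag)
  also have "\<dots> = (\<Prod>i\<in>UNIV. [:- D$i$i, 1:])"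
    by (simp add: mat_def liftp_def)
  finally show ?thesis unfolding char_poly_cart_def charmat_eq .
qed

lemma proots_prod_lin: "proots (\<Prod>i\<in>(UNIV::'n::finite set). [:- c i, 1:]) = image_mset c (mset_set UNIV)"
  by (subst proots_prod) (auto simp: sum_unfold_sum_mset)



lemma hconjv_hconjv[simp]: "hconjv (hconjv A) = A"
  by (simp add: hconjv_def vec_eq_iff)

lemma herm_gram: "herm_op (hconjv C ** C)"
  unfolding herm_op_def
  by (metis cinner_adj hconjv_hconjv matrix_vector_mul_assoc)

lemma svd_basis:
  fixes C :: "complex^'n^'n"
  shows "\<exists>v::'n \<Rightarrow> complex^'n. (\<forall>i j. cinner (v i) (v j) = (if i = j then 1 else 0)) \<and>
     (\<forall>x. x = (\<Sum>c\<in>UNIV. cinner (v c) x *s v c)) \<and>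
     (\<forall>i j. i \<noteq> j \<longrightarrow> cinner (C *v v i) (C *v v j) = 0) \<and>
     singular_values C = image_mset (\<lambda>i. norm (C *v v i)) (mset_set UNIV)"
proof -
  define H where "H = hconjv C ** C"
  obtain v :: "'n \<Rightarrow> complex^'n" and lam where
    on: "\<forall>i j. cinner (v i) (v j) = (if i = j then 1 else 0)" and
    ev: "\<forall>i. H *v v i = (lam i :: real) *\<^sub>R v i"
    using onb_exists[OF herm_gram[of C]] unfolding H_def by blast
  have HC: "H *v x = hconjv C *v (C *v x)" for x by (simp add: H_def matrix_vector_mul_assoc)
  have lam: "lam i = (norm (C *v v i))^2" for i
  proof -
    have "cinner (v i) (H *v v i) = of_real (lam i)"
      using on ev by (simp add: cinner_scaleR_right)
    moreover have "cinner (v i) (H *v v i) = cinner (C *v v i) (C *v v i)"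
      by (simp add: HC cinner_adj)
    ultimately show ?thesis using cinner_self[of "C *v v i"] of_real_eq_iff by metis
  qed
  have orthC: "cinner (C *v v i) (C *v v j) = 0" if "i \<noteq> j" for i j
  proof -
    have "cinner (C *v v i) (C *v v j) = cinner (v i) (H *v v j)"
      by (simp add: HC cinner_adj)
    also have "\<dots> = 0" using on ev that by (simp add: cinner_scaleR_right)
    finally show ?thesis .
  qed
  define U :: "complex^'n^'n" where "U = (\<chi> r c. v c $ r)"
  define Q where "Q = hconjv U"
  define D :: "complex^'n^'n" where "D = (\<chi> i j. if i = j then of_real (lam i) else 0)"
  have QU: "Q ** U = mat 1"
    using on by (simp add: Q_def U_def hconjv_def matrix_matrix_mult_def mat_def vec_eq_iff cinner_def)
  have HU: "H ** U = U ** D"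
  proof -
    have "(H ** U)$r$c = (H *v v c)$r" for r c
      by (simp add: U_def matrix_matrix_mult_def matrix_vector_mult_def)
    moreover have "(U ** D)$r$c = of_real (lam c) * (v c $ r)" for r c
      by (simp add: U_def D_def matrix_matrix_mult_def if_distrib if_distribR sum.delta'
          mult.commute cong: if_cong)
    moreover have "(lam c *\<^sub>R v c)$r = of_real (lam c) * (v c $ r)" for r c
      by (subst vector_scaleR_component) (simp add: scaleR_conv_of_real)
    ultimately show ?thesis using ev by (simp add: vec_eq_iff)
  qed
  have QHU: "Q ** H ** U = D"
    by (metis HU QU matrix_mul_assoc matrix_mul_lid)
  have cp: "char_poly_cart H = (\<Prod>i\<in>UNIV. [:- D$i$i, 1:])"
    by (rule char_poly_diag[OF QU QHU]) (simp add: D_def)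
  have "proots (char_poly_cart H) = image_mset (\<lambda>i. of_real (lam i)) (mset_set UNIV)"
    unfolding cp using proots_prod_lin[of "\<lambda>i. D$i$i"] by (simp add: D_def)
  then have sv: "singular_values C = image_mset (\<lambda>i. norm (C *v v i)) (mset_set UNIV)"
    by (simp add: singular_values_def hconj_hconjv H_def[symmetric] multiset.map_comp o_def lam)
  have UQ: "U ** Q = mat 1" using QU matrix_left_right_inverse by blast
  have exp: "x = (\<Sum>c\<in>UNIV. cinner (v c) x *s v c)" for x
  proof -
    have "x = (U ** Q) *v x" using UQ by simp
    also have "\<dots> = (\<Sum>c\<in>UNIV. cinner (v c) x *s v c)"
      apply (simp add: U_def Q_def hconjv_def matrix_matrix_mult_def matrix_vector_mult_def vec_eq_iff
          cinner_def sum_distrib_left sum_distrib_right sum_component mult_ac)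
      apply (intro allI)
      apply (rule sum.swap)
      done
    finally show ?thesis .
  qed
  show ?thesis using on exp orthC sv by blast
qed



lemma topk_struct:
  fixes \<sigma> :: "'n::finite \<Rightarrow> real"
  assumes k1: "1 \<le> k" and kn: "k \<le> CARD('n)"
  shows "\<exists>T t. card T = k \<and>
    sum_list (take k (rev (sorted_list_of_multiset (image_mset \<sigma> (mset_set UNIV))))) = sum \<sigma> T \<and>
    (\<forall>i\<in>T. t \<le> \<sigma> i) \<and> (\<forall>i. i \<notin> T \<longrightarrow> \<sigma> i \<le> t) \<and> (\<exists>j. t = \<sigma> j)"
proof -
  obtain xs :: "'n list" where xs: "distinct xs" "set xs = UNIV"
    using finite_distinct_list[of "UNIV::'n set"] by auto
  define ys where "ys = sort_key (\<lambda>i. - \<sigma> i) xs"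
  have ys: "distinct ys" "set ys = UNIV" using xs by (auto simp: ys_def)
  have len: "length ys = CARD('n)" using ys distinct_card by fastforce
  have "sorted (map (\<lambda>i. - \<sigma> i) ys)" by (simp add: ys_def)
  then have sw: "sorted_wrt (\<lambda>a b. \<sigma> b \<le> \<sigma> a) ys"
    by (simp add: sorted_map)
  have "sorted (rev (map \<sigma> ys))"
    using sw by (simp add: sorted_wrt_rev sorted_wrt_map)
  moreover have "image_mset \<sigma> (mset_set UNIV) = mset (rev (map \<sigma> ys))"
    using ys by (metis mset_map mset_rev mset_set_set)
  ultimately have sl: "sorted_list_of_multiset (image_mset \<sigma> (mset_set UNIV)) = rev (map \<sigma> ys)"
    by (metis sorted_list_of_multiset_mset sorted_sort_id)
  define T where "T = set (take k ys)"
  define t where "t = \<sigma> (ys ! (k - 1))"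
  have cardT: "card T = k" unfolding T_def using ys(1) kn len
    by (simp add: distinct_card)
  have sumT: "sum_list (take k (map \<sigma> ys)) = sum \<sigma> T"
    unfolding T_def using ys(1) by (simp add: take_map sum_list_distinct_conv_sum_set)
  have inT: "t \<le> \<sigma> i" if iT: "i \<in> T" for i
  proof -
    obtain a where a: "a < k" "a < length ys" "i = ys ! a" using iT
      by (auto simp: T_def in_set_conv_nth)
    show ?thesis
    proof (cases "a = k - 1")
      case True then show ?thesis using a by (simp add: t_def)
    next
      case False
      then have "a < k - 1" using a by simp
      then show ?thesis using sorted_wrt_nth_less[OF sw, of a "k - 1"] a kn len
        by (simp add: t_def)
    qed
  qed
  have notT: "\<sigma> i \<le> t" if niT: "i \<notin> T" for i
  proof -
    obtain b where b: "b < length ys" "i = ys ! b" using ys(2) by (metis UNIV_I in_set_conv_nth)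
    have "b \<ge> k"
    proof (rule ccontr)
      assume "\<not> k \<le> b"
      then have "i \<in> T" using b by (auto simp: T_def in_set_conv_nth intro!: exI[of _ b])
      then show False using niT by simp
    qed
    then have "k - 1 < b" using k1 by simp
    then show ?thesis using sorted_wrt_nth_less[OF sw, of "k - 1" b] b by (simp add: t_def)
  qed
  show ?thesis
    apply (intro exI[of _ T] exI[of _ t])
    using cardT sumT inT notT sl by (auto simp: t_def)
qed

lemma rearr:
  fixes \<sigma> c :: "'n::finite \<Rightarrow> real"
  assumes inT: "\<forall>i\<in>T. t \<le> \<sigma> i" and notT: "\<forall>i. i \<notin> T \<longrightarrow> \<sigma> i \<le> t"
    and c0: "\<And>i. 0 \<le> c i" and c1: "\<And>i. c i \<le> 1" and cs: "sum c UNIV \<le> real (card T)"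
    and t0: "0 \<le> t"
  shows "(\<Sum>i\<in>UNIV. \<sigma> i * c i) \<le> sum \<sigma> T"
proof -
  have pw: "\<sigma> i * c i - (if i \<in> T then \<sigma> i else 0) \<le> t * c i - (if i \<in> T then t else 0)" for i
  proof (cases "i \<in> T")
    case True
    then have "(\<sigma> i - t) * (c i - 1) \<le> 0" using inT c1
      by (intro mult_nonneg_nonpos) auto
    then show ?thesis using True by (simp add: algebra_simps)
  next
    case False
    then have "(t - \<sigma> i) * c i \<ge> 0" using notT c0 by simp
    then show ?thesis using False by (simp add: algebra_simps)
  qed
  have "(\<Sum>i\<in>UNIV. \<sigma> i * c i - (if i \<in> T then \<sigma> i else 0)) \<le> (\<Sum>i\<in>UNIV. t * c i - (if i \<in> T then t else 0))"
    by (rule sum_mono) (rule pw)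
  moreover have "(\<Sum>i\<in>UNIV. (if i \<in> T then \<sigma> i else 0)) = sum \<sigma> T"
    by (simp add: sum.If_cases)
  moreover have "(\<Sum>i\<in>UNIV. (if i \<in> T then t else (0::real))) = t * card T"
    by (simp add: sum.If_cases)
  moreover have "t * sum c UNIV \<le> t * card T" using cs t0 by (simp add: mult_left_mono)
  ultimately show ?thesis by (simp add: sum_subtractf sum_distrib_left)
qed



definition subON :: "('n \<Rightarrow> complex^'m) \<Rightarrow> bool" where
  "subON e \<longleftrightarrow> (\<forall>i j. i \<noteq> j \<longrightarrow> cinner (e i) (e j) = 0) \<and> (\<forall>i. norm (e i) \<le> 1)"

lemma cnj_mult_self: "cnj z * z = complex_of_real ((cmod z)^2)"
  by (metis complex_norm_square mult.commute of_real_power)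

lemma bessel:
  fixes e :: "'i::finite \<Rightarrow> complex^'n"
  assumes "subON e"
  shows "(\<Sum>i\<in>UNIV. (cmod (cinner (e i) y))^2) \<le> (norm y)^2"
proof -
  have orth: "\<And>i j. i \<noteq> j \<Longrightarrow> cinner (e i) (e j) = 0" and nb: "\<And>i. norm (e i) \<le> 1"
    using assms by (auto simp: subON_def)
  define c where "c i = cinner (e i) y" for i
  define s where "s = (\<Sum>i\<in>UNIV. c i *s e i)"
  have A: "cinner s y = (\<Sum>i\<in>UNIV. of_real ((cmod (c i))^2))"
    by (simp add: s_def cinner_sum_left cinner_smult_left c_def[symmetric] cnj_mult_self)
  have B: "cinner y s = (\<Sum>i\<in>UNIV. of_real ((cmod (c i))^2))"
  proof -
    have "cinner y (e i) = cnj (c i)" for i unfolding c_def by (rule cinner_commute)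
    then show ?thesis
      unfolding s_def cinner_sum_right cinner_smult_right
      by (intro sum.cong refl) (metis cnj_mult_self mult.commute)
  qed
  have Cc: "cinner s s = (\<Sum>i\<in>UNIV. of_real ((cmod (c i))^2 * (norm (e i))^2))"
  proof -
    have "cinner s s = (\<Sum>i\<in>UNIV. \<Sum>j\<in>UNIV. c i * (cnj (c j) * cinner (e j) (e i)))"
      by (simp add: s_def cinner_sum_left cinner_sum_right cinner_smult_left cinner_smult_right
          sum_distrib_left)
    also have "\<dots> = (\<Sum>i\<in>UNIV. \<Sum>j\<in>UNIV. if j = i then c i * (cnj (c i) * cinner (e i) (e i)) else 0)"
      by (intro sum.cong refl) (auto simp: orth)
    also have "\<dots> = (\<Sum>i\<in>UNIV. c i * (cnj (c i) * cinner (e i) (e i)))"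
      by simp
    also have "\<dots> = (\<Sum>i\<in>UNIV. of_real ((cmod (c i))^2 * (norm (e i))^2))"
      by (intro sum.cong refl) (metis cinner_self cnj_mult_self mult.assoc mult.commute of_real_mult)
    finally show ?thesis .
  qed
  have "cinner (y - s) (y - s) = cinner y y - cinner y s - cinner s y + cinner s s"
    by (simp add: cinner_diff_left cinner_diff_right)
  then have "complex_of_real ((norm (y - s))^2) = cinner y y - cinner y s - cinner s y + cinner s s"
    by (metis cinner_self)
  then have "(norm (y - s))^2 = Re (cinner y y - cinner y s - cinner s y + cinner s s)"
    by (metis Re_complex_of_real)
  then have "0 \<le> Re (cinner y y - cinner y s - cinner s y + cinner s s)"
    by (metis zero_le_power2)
  then have "0 \<le> (norm y)^2 - 2 * (\<Sum>i\<in>UNIV. (cmod (c i))^2) + (\<Sum>i\<in>UNIV. (cmod (c i))^2 * (norm (e i))^2)"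
    by (simp add: A B Cc cinner_self[of y] Re_sum)
  moreover have "(\<Sum>i\<in>UNIV. (cmod (c i))^2 * (norm (e i))^2) \<le> (\<Sum>i\<in>UNIV. (cmod (c i))^2)"
  proof (rule sum_mono)
    fix i
    have "(norm (e i))^2 \<le> 1" using nb[of i] by (simp add: power_le_one)
    then show "(cmod (c i))^2 * (norm (e i))^2 \<le> (cmod (c i))^2"
      by (simp add: mult_left_le)
  qed
  ultimately show ?thesis by (simp add: c_def)
qed



definition gfun :: "('n \<Rightarrow> complex^'n) \<Rightarrow> ('n \<Rightarrow> complex^'n) \<Rightarrow> complex^'n^'n \<Rightarrow> real" where
  "gfun x y C = Re (\<Sum>j\<in>UNIV. cinner (y j) (C *v x j))"

definition feas :: "nat \<Rightarrow> ('n \<Rightarrow> complex^'n) \<Rightarrow> ('n \<Rightarrow> complex^'n) \<Rightarrow> bool" where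
  "feas k x y \<longleftrightarrow> subON x \<and> subON y \<and> (\<Sum>j\<in>UNIV. (norm (x j))^2) \<le> real k \<and> (\<Sum>j\<in>UNIV. (norm (y j))^2) \<le> real k"

lemma amgm: "a * b \<le> (a^2 + b^2) / (2::real)"
  using sum_squares_bound[of a b] by (simp add: power2_eq_square)

lemma svd_data:
  fixes C :: "complex^'n^'n"
  assumes k1: "1 \<le> k" and kn: "k \<le> CARD('n)"
  obtains v u :: "'n \<Rightarrow> complex^'n" and \<sigma> :: "'n \<Rightarrow> real" and T :: "'n set" and t :: real
  where "\<forall>i j. cinner (v i) (v j) = (if i = j then 1 else 0)"
    "\<forall>x. x = (\<Sum>c\<in>UNIV. cinner (v c) x *s v c)"
    "subON u" "\<forall>i. C *v v i = \<sigma> i *\<^sub>R u i" "\<forall>i. 0 \<le> \<sigma> i"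
    "\<forall>i. \<sigma> i > 0 \<longrightarrow> norm (u i) = 1"
    "card T = k" "ky_fan_norm k C = sum \<sigma> T"
    "\<forall>i\<in>T. t \<le> \<sigma> i" "\<forall>i. i \<notin> T \<longrightarrow> \<sigma> i \<le> t" "0 \<le> t"
proof -
  obtain v :: "'n \<Rightarrow> complex^'n" where on: "\<forall>i j. cinner (v i) (v j) = (if i = j then 1 else 0)" and
     ex: "\<forall>x. x = (\<Sum>c\<in>UNIV. cinner (v c) x *s v c)" and
     oc: "\<forall>i j. i \<noteq> j \<longrightarrow> cinner (C *v v i) (C *v v j) = 0" and
     sv: "singular_values C = image_mset (\<lambda>i. norm (C *v v i)) (mset_set UNIV)"
    using svd_basis[of C] by blast
  define \<sigma> where "\<sigma> i = norm (C *v v i)" for i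
  define u where "u i = (if \<sigma> i > 0 then (1 / \<sigma> i) *\<^sub>R (C *v v i) else 0)" for i
  have Cv: "C *v v i = \<sigma> i *\<^sub>R u i" for i
    by (cases "\<sigma> i > 0") (auto simp: u_def \<sigma>_def)
  have s0: "0 \<le> \<sigma> i" for i by (simp add: \<sigma>_def)
  have un: "\<sigma> i > 0 \<longrightarrow> norm (u i) = 1" for i by (auto simp: u_def \<sigma>_def)
  have "subON u"
    unfolding subON_def
  proof safe
    fix i j :: 'n assume "i \<noteq> j"
    then show "cinner (u i) (u j) = 0"
      using oc by (auto simp: u_def cinner_scaleR_left cinner_scaleR_right)
  next
    fix i show "norm (u i) \<le> 1" using un[of i] by (auto simp: u_def)
  qed
  obtain T t where T: "card T = k"
    "sum_list (take k (rev (sorted_list_of_multiset (image_mset \<sigma> (mset_set UNIV))))) = sum \<sigma> T"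
    "\<forall>i\<in>T. t \<le> \<sigma> i" "\<forall>i. i \<notin> T \<longrightarrow> \<sigma> i \<le> t" "\<exists>j. t = \<sigma> j"
    using topk_struct[OF k1 kn, of \<sigma>] by blast
  have ky: "ky_fan_norm k C = sum \<sigma> T"
    using T(2) by (simp add: ky_fan_norm_def sv \<sigma>_def[abs_def])
  have "0 \<le> t" using T(5) s0 by auto
  show ?thesis
    by (rule that[OF on ex \<open>subON u\<close> _ _ _ T(1) ky T(3,4) \<open>0 \<le> t\<close>]) (use Cv s0 un in auto)
qed

lemma cmod_cinner_commute: "cmod (cinner a b) = cmod (cinner b a)"
  by (metis cinner_commute complex_mod_cnj)

lemma norm_one_cinner: "cinner x x = 1 \<Longrightarrow> norm x = 1"
proof -
  assume "cinner x x = 1"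
  then have "complex_of_real ((norm x)^2) = 1" by (simp only: cinner_self)
  then have "(norm x)^2 = 1" by (simp only: of_real_eq_1_iff)
  then show "norm x = 1" using norm_ge_zero[of x] by (simp add: power2_eq_1_iff) 
qed

lemma subON_onb: "\<forall>i j. cinner (v i) (v j) = (if i = j then 1 else 0) \<Longrightarrow> subON v"
  unfolding subON_def using norm_one_cinner by (metis order_refl)

lemma ky_upper:
  fixes C :: "complex^'n^'n"
  assumes k1: "1 \<le> k" and kn: "k \<le> CARD('n)" and fe: "feas k x y"
  shows "gfun x y C \<le> ky_fan_norm k C"
proof -
  obtain v u :: "'n \<Rightarrow> complex^'n" and \<sigma> :: "'n \<Rightarrow> real" and T :: "'n set" and t :: real
  where on: "\<forall>i j. cinner (v i) (v j) = (if i = j then 1 else 0)"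
    and ex: "\<forall>x. x = (\<Sum>c\<in>UNIV. cinner (v c) x *s v c)"
    and su: "subON u" and Cv: "\<forall>i. C *v v i = \<sigma> i *\<^sub>R u i" and s0: "\<forall>i. 0 \<le> \<sigma> i"
    and un: "\<forall>i. \<sigma> i > 0 \<longrightarrow> norm (u i) = 1"
    and T: "card T = k" "ky_fan_norm k C = sum \<sigma> T"
       "\<forall>i\<in>T. t \<le> \<sigma> i" "\<forall>i. i \<notin> T \<longrightarrow> \<sigma> i \<le> t" "0 \<le> t"
    by (rule svd_data[OF k1 kn, of C])
  have sx: "subON x" and sy: "subON y" and nx: "(\<Sum>j\<in>UNIV. (norm (x j))^2) \<le> real k"
    and ny: "(\<Sum>j\<in>UNIV. (norm (y j))^2) \<le> real k" using fe by (auto simp: feas_def)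
  have sv: "subON v" using on by (rule subON_onb)
  define a where "a i j = cinner (v i) (x j)" for i j
  define b where "b i j = cinner (u i) (y j)" for i j
  define d where "d i j = ((cmod (a i j))^2 + (cmod (b i j))^2) / 2" for i j
  have step1: "cinner (y j) (C *v x j) = (\<Sum>i\<in>UNIV. a i j * (of_real (\<sigma> i) * cnj (b i j)))" for j
  proof -
    have xj: "x j = (\<Sum>i\<in>UNIV. a i j *s v i)"
      unfolding a_def by (rule ex[rule_format])
    have "C *v x j = (\<Sum>i\<in>UNIV. a i j *s (\<sigma> i *\<^sub>R u i))"
      by (subst xj) (simp only: mv_sum mv_smult Cv)
    then have "cinner (y j) (C *v x j) = (\<Sum>i\<in>UNIV. a i j * (of_real (\<sigma> i) * cinner (y j) (u i)))"
      by (simp only: cinner_sum_right cinner_smult_right cinner_scaleR_right)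
    also have "\<dots> = (\<Sum>i\<in>UNIV. a i j * (of_real (\<sigma> i) * cnj (b i j)))"
      unfolding b_def by (intro sum.cong refl) (metis cinner_commute)
    finally show ?thesis .
  qed
  have step2: "Re (cinner (y j) (C *v x j)) \<le> (\<Sum>i\<in>UNIV. \<sigma> i * d i j)" for j
  proof -
    have "Re (cinner (y j) (C *v x j)) \<le> cmod (cinner (y j) (C *v x j))" by (rule complex_Re_le_cmod)
    also have "\<dots> \<le> (\<Sum>i\<in>UNIV. cmod (a i j * (of_real (\<sigma> i) * cnj (b i j))))"
      unfolding step1 by (rule norm_sum)
    also have "\<dots> = (\<Sum>i\<in>UNIV. \<sigma> i * (cmod (a i j) * cmod (b i j)))"
      using s0 by (simp add: norm_mult mult_ac)
    also have "\<dots> \<le> (\<Sum>i\<in>UNIV. \<sigma> i * d i j)"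
      unfolding d_def using s0 by (intro sum_mono mult_left_mono amgm) auto
    finally show ?thesis .
  qed
  define c where "c i = (\<Sum>j\<in>UNIV. d i j)" for i
  have "gfun x y C = (\<Sum>j\<in>UNIV. Re (cinner (y j) (C *v x j)))"
    by (simp add: gfun_def Re_sum)
  also have "\<dots> \<le> (\<Sum>j\<in>UNIV. \<Sum>i\<in>UNIV. \<sigma> i * d i j)"
    by (intro sum_mono step2)
  also have "\<dots> = (\<Sum>i\<in>UNIV. \<sigma> i * c i)"
    unfolding c_def sum_distrib_left by (rule sum.swap)
  also have "\<dots> \<le> sum \<sigma> T"
  proof (rule rearr[OF T(3,4)])
    fix i
    show "0 \<le> c i" by (simp add: c_def d_def sum_nonneg)
    have "(\<Sum>j\<in>UNIV. (cmod (a i j))^2) \<le> (norm (v i))^2"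
      using bessel[OF sx, of "v i"] by (simp add: a_def cmod_cinner_commute)
    moreover have "norm (v i) = 1" using on by (simp add: norm_one_cinner)
    moreover have "(\<Sum>j\<in>UNIV. (cmod (b i j))^2) \<le> (norm (u i))^2"
      using bessel[OF sy, of "u i"] by (simp add: b_def cmod_cinner_commute)
    moreover have "(norm (u i))^2 \<le> 1" using su by (simp add: subON_def power_le_one)
    ultimately show "c i \<le> 1" by (simp add: c_def d_def sum.distrib sum_divide_distrib[symmetric])
  next
    have "(\<Sum>i\<in>UNIV. c i) = ((\<Sum>i\<in>UNIV. \<Sum>j\<in>UNIV. (cmod (a i j))^2) + (\<Sum>i\<in>UNIV. \<Sum>j\<in>UNIV. (cmod (b i j))^2)) / 2"
      unfolding c_def d_def by (simp add: sum.distrib sum_divide_distrib[symmetric])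
    moreover have "(\<Sum>i\<in>UNIV. \<Sum>j\<in>UNIV. (cmod (a i j))^2) = (\<Sum>j\<in>UNIV. \<Sum>i\<in>UNIV. (cmod (a i j))^2)"
      by (rule sum.swap)
    moreover have "(\<Sum>i\<in>UNIV. \<Sum>j\<in>UNIV. (cmod (b i j))^2) = (\<Sum>j\<in>UNIV. \<Sum>i\<in>UNIV. (cmod (b i j))^2)"
      by (rule sum.swap)
    moreover have "(\<Sum>j\<in>UNIV. \<Sum>i\<in>UNIV. (cmod (a i j))^2) \<le> real k"
      using order_trans[OF sum_mono[OF bessel[OF sv]] nx] by (simp add: a_def)
    moreover have "(\<Sum>j\<in>UNIV. \<Sum>i\<in>UNIV. (cmod (b i j))^2) \<le> real k"
      using order_trans[OF sum_mono[OF bessel[OF su]] ny] by (simp add: b_def)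
    ultimately show "sum c UNIV \<le> real (card T)" using T(1) by simp
  qed (use T(5) in auto)
  finally show ?thesis using T(2) by simp
qed



lemma ky_attain:
  fixes C :: "complex^'n^'n"
  assumes k1: "1 \<le> k" and kn: "k \<le> CARD('n)"
  shows "\<exists>x y. feas k x y \<and> gfun x y C = ky_fan_norm k C"
proof -
  obtain v u :: "'n \<Rightarrow> complex^'n" and \<sigma> :: "'n \<Rightarrow> real" and T :: "'n set" and t :: real
  where on: "\<forall>i j. cinner (v i) (v j) = (if i = j then 1 else 0)"
    and ex: "\<forall>x. x = (\<Sum>c\<in>UNIV. cinner (v c) x *s v c)"
    and su: "subON u" and Cv: "\<forall>i. C *v v i = \<sigma> i *\<^sub>R u i" and s0: "\<forall>i. 0 \<le> \<sigma> i"
    and un: "\<forall>i. \<sigma> i > 0 \<longrightarrow> norm (u i) = 1"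
    and T: "card T = k" "ky_fan_norm k C = sum \<sigma> T"
       "\<forall>i\<in>T. t \<le> \<sigma> i" "\<forall>i. i \<notin> T \<longrightarrow> \<sigma> i \<le> t" "0 \<le> t"
    by (rule svd_data[OF k1 kn, of C])
  have vn: "norm (v i) = 1" for i using on by (simp add: norm_one_cinner)
  have un1: "norm (u i) \<le> 1" for i using su by (simp add: subON_def)
  define x where "x j = (if j \<in> T then v j else 0)" for j
  define y where "y j = (if j \<in> T then u j else 0)" for j
  have sx: "subON x" using on vn by (auto simp: subON_def x_def)
  have sy: "subON y" using su by (auto simp: subON_def y_def)
  have nx: "(\<Sum>j\<in>UNIV. (norm (x j))^2) = real k"
  proof -
    have "(\<Sum>j\<in>UNIV. (norm (x j))^2) = (\<Sum>j\<in>UNIV. if j \<in> T then 1 else 0)"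
      by (intro sum.cong refl) (simp add: x_def vn)
    also have "\<dots> = real (card T)" by (simp add: sum.If_cases)
    finally show ?thesis using T(1) by simp
  qed
  have ny: "(\<Sum>j\<in>UNIV. (norm (y j))^2) \<le> real k"
  proof -
    have "(\<Sum>j\<in>UNIV. (norm (y j))^2) \<le> (\<Sum>j\<in>UNIV. if j \<in> T then 1 else 0)"
      by (intro sum_mono) (simp add: y_def power_le_one un1)
    also have "\<dots> = real (card T)" by (simp add: sum.If_cases)
    finally show ?thesis using T(1) by simp
  qed
  have trm: "cinner (y j) (C *v x j) = of_real (if j \<in> T then \<sigma> j else 0)" for j
  proof (cases "j \<in> T")
    case True
    have "cinner (u j) (\<sigma> j *\<^sub>R u j) = of_real (\<sigma> j * (norm (u j))^2)"
      by (simp add: cinner_scaleR_right cinner_self)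
    also have "\<sigma> j * (norm (u j))^2 = \<sigma> j"
      using un s0 by (metis less_eq_real_def mult_cancel_left2 mult_zero_left one_power2)
    finally show ?thesis using True Cv by (simp add: x_def y_def)
  qed (simp add: x_def y_def)
  have "gfun x y C = (\<Sum>j\<in>UNIV. (if j \<in> T then \<sigma> j else 0))"
    by (simp add: gfun_def trm Re_sum)
  also have "\<dots> = sum \<sigma> T" by (simp add: sum.If_cases)
  finally have "gfun x y C = ky_fan_norm k C" using T(2) by simp
  moreover have "feas k x y" using sx sy nx ny by (simp add: feas_def)
  ultimately show ?thesis by blast
qed

lemma gfun_add: "gfun x y (A + B) = gfun x y A + gfun x y B"
  by (simp add: gfun_def matrix_vector_mult_add_rdistrib cinner_add_right sum.distrib)

lemma gfun_scaleR: "gfun x y (r *\<^sub>R (A::complex^'n^'n)) = r * gfun x y A"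
proof -
  have "(r *\<^sub>R A) *v z = r *\<^sub>R (A *v z)" for z :: "complex^'n"
    by (simp add: matrix_vector_mult_def vec_eq_iff scaleR_sum_right)
  then show ?thesis
    by (simp add: gfun_def cinner_scaleR_right sum_distrib_left[symmetric])
qed

lemma gfun_linear: "linear (gfun x y)"
  by (rule linearI) (simp_all add: gfun_add gfun_scaleR)

lemma ky_subgrad:
  fixes A B :: "complex^'n^'n"
  assumes k1: "1 \<le> k" and kn: "k \<le> CARD('n)"
  obtains x y where "feas k x y" "gfun x y A = ky_fan_norm k A"
    "\<And>B. ky_fan_norm k A + gfun x y B \<le> ky_fan_norm k (A + B)"
proof -
  obtain x y where f: "feas k x y" and g: "gfun x y A = ky_fan_norm k A"
    using ky_attain[OF k1 kn] by blast
  have "ky_fan_norm k A + gfun x y B \<le> ky_fan_norm k (A + B)" for B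
    using ky_upper[OF k1 kn f, of "A + B"] g by (simp add: gfun_add)
  then show ?thesis using that f g by blast
qed

lemma ky_convex:
  assumes k1: "1 \<le> k" and kn: "k \<le> CARD('n)"
  shows "convex_on UNIV (ky_fan_norm k :: complex^'n^'n \<Rightarrow> real)"
proof (rule convex_onI)
  fix t :: real and A B :: "complex^'n^'n"
  assume t: "0 < t" "t < 1"
  obtain x y where f: "feas k x y" and g: "gfun x y ((1 - t) *\<^sub>R A + t *\<^sub>R B) = ky_fan_norm k ((1 - t) *\<^sub>R A + t *\<^sub>R B)"
    using ky_attain[OF k1 kn] by blast
  have "ky_fan_norm k ((1 - t) *\<^sub>R A + t *\<^sub>R B) = (1 - t) * gfun x y A + t * gfun x y B"
    using g by (simp add: gfun_add gfun_scaleR)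
  also have "\<dots> \<le> (1 - t) * ky_fan_norm k A + t * ky_fan_norm k B"
    using t ky_upper[OF k1 kn f, of A] ky_upper[OF k1 kn f, of B]
    by (intro add_mono mult_left_mono) auto
  finally show "ky_fan_norm k ((1 - t) *\<^sub>R A + t *\<^sub>R B) \<le> (1 - t) * ky_fan_norm k A + t * ky_fan_norm k B" .
qed simp

lemma ky_continuous:
  assumes k1: "1 \<le> k" and kn: "k \<le> CARD('n)"
  shows "continuous_on UNIV (ky_fan_norm k :: complex^'n^'n \<Rightarrow> real)"
  by (rule convex_on_continuous[OF open_UNIV ky_convex[OF k1 kn]])



lemma pz_pointwise:
  fixes z t :: real assumes t: "t > 0"
  shows "max z 0 \<le> (t * z^2 + (if z \<ge> 0 then 1 else 0) / t) / 2"
proof (cases "z \<ge> 0")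
  case True
  have "0 \<le> (t * z - 1)^2" by simp
  then have "2 * t * z \<le> t^2 * z^2 + 1" by (simp add: power2_eq_square algebra_simps)
  moreover have "(t * z^2 + 1 / t) * t = t^2 * z^2 + 1" using t by (simp add: field_simps power2_eq_square)
  ultimately have "2 * z * t \<le> (t * z^2 + 1 / t) * t" by (simp add: mult_ac)
  then have "2 * z \<le> t * z^2 + 1 / t" using mult_le_cancel_right_pos[OF t] by blast
  then show ?thesis using True by simp
next
  case False then show ?thesis using t by simp
qed

lemma pz_real:
  fixes M :: "'a measure" and Z :: "'a \<Rightarrow> real"
  assumes P: "prob_space M" and meas: "Z \<in> borel_measurable M" and int: "integrable M Z"
    and mean: "integral\<^sup>L M Z = 0" and int2: "integrable M (\<lambda>x. (Z x)^2)"
  shows "(integral\<^sup>L M (\<lambda>x. \<bar>Z x\<bar>))^2 \<le> 4 * measure M {x\<in>space M. Z x \<ge> 0} * integral\<^sup>L M (\<lambda>x. (Z x)^2)"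
proof -
  interpret prob_space M by (rule P)
  define E where "E = {x\<in>space M. Z x \<ge> 0}"
  have Emeas: "E \<in> sets M" unfolding E_def using meas by measurable
  define p where "p = measure M E"
  define s where "s = integral\<^sup>L M (\<lambda>x. (Z x)^2)"
  define m where "m = integral\<^sup>L M (\<lambda>x. \<bar>Z x\<bar>)"
  define q where "q = integral\<^sup>L M (\<lambda>x. max (Z x) 0)"
  have s0: "0 \<le> s" unfolding s_def by simp
  have p0: "0 \<le> p" unfolding p_def by simp
  have intmax: "integrable M (\<lambda>x. max (Z x) 0)" using int by auto
  have "m = integral\<^sup>L M (\<lambda>x. 2 * max (Z x) 0 - Z x)"
    unfolding m_def by (intro Bochner_Integration.integral_cong refl) auto
  also have "\<dots> = 2 * q - integral\<^sup>L M Z"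
    using intmax int by (simp add: q_def)
  finally have mq: "m = 2 * q" using mean by simp
  have q0: "0 \<le> q" unfolding q_def by simp
  have key: "q \<le> (t * s + p / t) / 2" if t: "t > 0" for t
  proof -
    have intind: "integrable M (indicator E :: 'a \<Rightarrow> real)"
      using Emeas by (intro integrable_real_indicator) (auto simp: less_top[symmetric])
    have "q \<le> integral\<^sup>L M (\<lambda>x. (t * (Z x)^2 + indicator E x / t) / 2)"
      unfolding q_def
    proof (rule integral_mono)
      show "integrable M (\<lambda>x. (t * (Z x)^2 + indicator E x / t) / 2)"
        using int2 intind by auto
      fix x assume x: "x \<in> space M"
      have "indicator E x = (if Z x \<ge> 0 then 1 else (0::real))"
        using x by (simp add: E_def indicator_def)
      then show "max (Z x) 0 \<le> (t * (Z x)^2 + indicator E x / t) / 2"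
        using pz_pointwise[OF t, of "Z x"] by simp
    qed (use intmax in auto)
    also have "\<dots> = (t * s + p / t) / 2"
      using int2 intind Emeas by (simp add: s_def p_def)
    finally show ?thesis .
  qed
  have "q^2 \<le> p * s"
  proof (cases "q = 0")
    case True then show ?thesis using p0 s0 by simp
  next
    case False
    then have qpos: "q > 0" using q0 by simp
    have spos: "s > 0"
    proof (rule ccontr)
      assume "\<not> s > 0"
      then have "s = 0" using s0 by simp
      then have "q \<le> p / t / 2" if "t > 0" for t using key[OF that] by simp
      from this[of "(p + 1) / q"] qpos p0 have "q \<le> p / ((p + 1) / q) / 2" by simp
      also have "\<dots> = q * p / (2 * (p + 1))" using p0 qpos by (simp add: field_simps)
      also have "\<dots> < q"
      proof -
        have "q * p < q * (2 * (p + 1))" using qpos p0 by (intro mult_strict_left_mono) auto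
        then show ?thesis using p0 by (simp add: pos_divide_less_eq mult.commute)
      qed
      finally show False by simp
    qed
    have "q \<le> ((q / s) * s + p / (q / s)) / 2" using key[of "q / s"] qpos spos by simp
    then have "q \<le> (q + p * s / q) / 2" using spos by simp
    then have "q \<le> p * s / q" by simp
    then show ?thesis using qpos by (simp add: power2_eq_square field_simps)
  qed
  then have "m^2 \<le> 4 * p * s" using mq by (simp add: power2_eq_square)
  then show ?thesis unfolding m_def s_def p_def E_def .
qed



lemma pz_enn:
  fixes M :: "'a measure" and X :: "'a \<Rightarrow> 'b" and f :: "'b \<Rightarrow> real"
  assumes P: "prob_space M" and meas: "(\<lambda>x. f (X x)) \<in> borel_measurable M"
    and int: "integrable M (\<lambda>x. f (X x))" and mean: "(\<integral>x. f (X x) \<partial>M) = 0"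
  shows "ennreal (1/4) * pz_ratio M X f \<le> emeasure M {x\<in>space M. f (X x) \<ge> 0}"
proof -
  interpret prob_space M by (rule P)
  define E where "E = {x\<in>space M. f (X x) \<ge> 0}"
  have Emeas: "E \<in> sets M" unfolding E_def using meas by measurable
  define S where "S = (\<integral>\<^sup>+ x. ennreal ((f (X x))\<^sup>2) \<partial>M)"
  have m2: "(\<lambda>x. ennreal ((f (X x))\<^sup>2)) \<in> borel_measurable M" using meas by measurable
  consider "S = 0" | "S = \<infinity>" | "S \<noteq> 0" "S \<noteq> \<infinity>" by blast
  then show ?thesis
  proof cases
    case 1
    then have r: "pz_ratio M X f = 1" by (simp add: pz_ratio_def S_def)
    have "AE x in M. ennreal ((f (X x))\<^sup>2) = 0"
      using 1 nn_integral_0_iff_AE[OF m2] by (simp add: S_def)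
    then have "AE x in M. x \<in> E"
      by (rule AE_mp) (auto simp: E_def)
    then have "emeasure M E = 1" using emeasure_eq_1_AE[OF Emeas] by simp
    then show ?thesis using r by (simp add: E_def[symmetric] ennreal_le_1)
  next
    case 2
    then have "pz_ratio M X f = 0" by (simp add: pz_ratio_def S_def)
    then show ?thesis by simp
  next
    case 3
    have int2: "integrable M (\<lambda>x. (f (X x))^2)"
      using 3 meas by (intro integrableI_nonneg) (auto simp: S_def less_top)
    define s where "s = (\<integral>x. (f (X x))^2 \<partial>M)"
    have Ss: "S = ennreal s" unfolding S_def s_def
      by (rule nn_integral_eq_integral[OF int2]) simp
    have s0: "s > 0" using 3 Ss s_def by (metis ennreal_0 integral_nonneg_AE less_eq_real_def
          zero_le_power2 AE_I2)
    define m where "m = (\<integral>x. \<bar>f (X x)\<bar> \<partial>M)"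
    have Am: "(\<integral>\<^sup>+ x. ennreal \<bar>f (X x)\<bar> \<partial>M) = ennreal m" unfolding m_def
      by (rule nn_integral_eq_integral) (use int in auto)
    have m0: "m \<ge> 0" unfolding m_def by simp
    have r: "pz_ratio M X f = ennreal (m^2 / s)"
      using 3 s0 m0 by (simp add: pz_ratio_def S_def[symmetric] Am Ss ennreal_power divide_ennreal)
    have "m^2 \<le> 4 * measure M E * s"
      using pz_real[OF P meas int mean int2] by (simp add: m_def s_def E_def)
    then have le: "1/4 * (m^2 / s) \<le> measure M E" using s0 by (simp add: field_simps)
    have "ennreal (1/4 * (m^2 / s)) = ennreal (1/4) * ennreal (m^2 / s)"
      by (rule ennreal_mult) (use s0 in auto)
    then have "ennreal (1/4) * pz_ratio M X f = ennreal (1/4 * (m^2 / s))"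
      using r by simp
    also have "\<dots> \<le> ennreal (measure M E)" using le by (rule ennreal_leI)
    also have "\<dots> = emeasure M E" by (simp add: emeasure_eq_measure)
    finally show ?thesis by (simp add: E_def)
  qed
qed



theorem lemma5:
  fixes M :: "'a measure" and X :: "'a \<Rightarrow> complex^'n^'n"
    and A :: "complex^'n^'n" and k :: nat
  assumes "prob_space M"
    and "X \<in> borel_measurable M"
    and "integrable M X" and "(\<integral>\<omega>. X \<omega> \<partial>M) = 0"
    and "\<forall>\<omega>\<in>space M. hermitian (X \<omega>)"
    and "hermitian A"
    and "k \<le> CARD('n)"
    and "ky_fan_norm k A > 0"
  shows "emeasure M {\<omega> \<in> space M. ky_fan_norm k (A + X \<omega>) \<ge> ky_fan_norm k A}
           \<ge> ennreal (1/4) * (INF f \<in> {f :: complex^'n^'n \<Rightarrow> real. linear f}. pz_ratio M X f)"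
proof -
  note P = assms(1) and Xm = assms(2) and Xi = assms(3) and X0 = assms(4) and kn = assms(7)
  have k1: "1 \<le> k"
  proof (rule ccontr)
    assume "\<not> 1 \<le> k"
    then have "k = 0" by simp
    then show False using assms(8) by (simp add: ky_fan_norm_def)
  qed
  obtain x y where sub: "\<And>B. ky_fan_norm k A + gfun x y B \<le> ky_fan_norm k (A + B)"
    using ky_subgrad[OF k1 kn, of A] by metis
  define f0 where "f0 = gfun x y"
  have lin: "linear f0" unfolding f0_def by (rule gfun_linear)
  have bl: "bounded_linear f0" using lin by (simp add: linear_conv_bounded_linear)
  have cf: "continuous_on UNIV f0" using bl by (rule linear_continuous_on)
  have meas: "(\<lambda>w. f0 (X w)) \<in> borel_measurable M"
    using borel_measurable_continuous_onI[OF cf] Xm by (rule measurable_compose[rotated])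
  have int: "integrable M (\<lambda>w. f0 (X w))" using integrable_bounded_linear[OF bl Xi] .
  have mean: "(\<integral>w. f0 (X w) \<partial>M) = 0"
    using integral_bounded_linear[OF bl Xi] X0 linear_0[OF lin] by simp
  have kyc: "continuous_on UNIV (ky_fan_norm k :: complex^'n^'n \<Rightarrow> real)"
    by (rule ky_continuous[OF k1 kn])
  have "(\<lambda>w. A + X w) \<in> borel_measurable M" using Xm by measurable
  then have kym: "(\<lambda>w. ky_fan_norm k (A + X w)) \<in> borel_measurable M"
    using borel_measurable_continuous_onI[OF kyc] by (rule measurable_compose)
  have Emeas: "{\<omega> \<in> space M. ky_fan_norm k (A + X \<omega>) \<ge> ky_fan_norm k A} \<in> sets M"
    using kym by measurable
  have sub2: "{w \<in> space M. f0 (X w) \<ge> 0} \<subseteq> {\<omega> \<in> space M. ky_fan_norm k (A + X \<omega>) \<ge> ky_fan_norm k A}"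
  proof safe
    fix w assume "w \<in> space M" "0 \<le> f0 (X w)"
    then show "ky_fan_norm k A \<le> ky_fan_norm k (A + X w)"
      using sub[of "X w"] unfolding f0_def by linarith
  qed
  have "ennreal (1/4) * (INF f \<in> {f :: complex^'n^'n \<Rightarrow> real. linear f}. pz_ratio M X f)
        \<le> ennreal (1/4) * pz_ratio M X f0"
    using lin by (intro mult_left_mono INF_lower) auto
  also have "\<dots> \<le> emeasure M {w \<in> space M. f0 (X w) \<ge> 0}"
    by (rule pz_enn[where f=f0 and X=X, OF P meas int mean])
  also have "\<dots> \<le> emeasure M {\<omega> \<in> space M. ky_fan_norm k (A + X \<omega>) \<ge> ky_fan_norm k A}"
    by (rule emeasure_mono[OF sub2 Emeas])
  finally show ?thesis .
qed

end
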